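(* Let $T$ be a decomposition tree of a distance-hereditary graph $G$, and let $v$ be an internal node of $T$ labeled $\oplus$ with left child $v_l$ and right child $v_r$, such that property (P) holds at $v_l$ and at $v_r$. Assume that $\hat\alpha(v_r)\le\hat\beta(v_l)$, and that neither ($\hat\alpha(v_l)=\hat\beta(v_r)=0$) nor ($\hat\alpha(v_r)=\hat\beta(v_l)=0$) holds. Then $\hat\beta(v)=\hat\beta(v_l)-\hat\alpha(v_r)$.
   Context: All graphs are finite, simple, undirected. For a graph $H$ and $S\subseteq V(H)$, $N_H[S]$ is $S$ together with all vertices adjacent to a vertex of $S$, and $H[S]$ is the induced subgraph. Graphs carry a "twin set": a single-vertex graph on $x$ has twin set $\{x\}$. For vertex-disjoint graphs $G_l,G_r$ with twin sets $TS(G_l),TS(G_r)$: the true twin operation $G_l\otimes G_r$ has vertex set $V(G_l)\cup V(G_r)$, edge set $E(G_l)\cup E(G_r)\cup\{uw: u\in TS(G_l), w\in TS(G_r)\}$ and twin set $TS(G_l)\cup TS(G_r)$; the false twin operation $G_l\odot G_r$ has vertex set $V(G_l)\cup V(G_r)$, edge set $E(G_l)\cup E(G_r)$, twin set $TS(G_l)\cup TS(G_r)$; the attachment operation $G_l\oplus G_r$ has the same vertex and edge sets as $G_l\otimes G_r$ and twin set $TS(G_l)$. A decomposition tree $T$ of $G$ is a rooted binary tree whose leaves are in bijection with $V(G)$, each internal node having a left and a right child and a label in $\{\otimes,\odot,\oplus\}$; for each node $v$ define $\hat G(v)$ and $\hat{TS}(v)$ recursively: for a leaf $x$, the single-vertex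 graph on $x$ with twin set $\{x\}$; for an internal node $v$ with label $\circ$ and children $v_l,v_r$, $\hat G(v)=\hat G(v_l)\circ\hat G(v_r)$ with the corresponding twin set; one requires $\hat G(\text{root})=G$. Then $\hat G(v)$ is the subgraph of $G$ induced by the set $\hat V(v)$ of leaves below $v$. For a node $u$ and $0\le k\le|\hat{TS}(u)|$, call $S\subseteq\hat V(u)$ $k$-feasible if $\hat V(u)\setminus\hat{TS}(u)\subseteq N_{\hat G(u)}[S]$ and there is $X\subseteq S\cap\hat{TS}(u)$ with $|X|=k$ such that $\hat G(u)[S\setminus X]$ has a perfect matching. $\hat\gamma_k(u)$ is the minimum size of a $k$-feasible set. $\hat{min}(u)=\min\{\hat\gamma_k(u):0\le k\le|\hat{TS}(u)|\}$, and $\hat\alpha(u)$, $\hat\beta(u)$ are the smallest and the largest $k$ with $\hat\gamma_k(u)=\hat{min}(u)$. Property (P) holds at $u$ if for every $0\le k\le|\hat{TS}(u)|$: $\hat\gamma_k(u)=\hat{min}(u)+\hat\alpha(u)-k$ when $k\le\hat\alpha(u)$; $\hat\gamma_k(u)=\hat{min}(u)+k-\hat\beta(u)$ when $k\ge\hat\beta(u)$; $\hat\gamma_k(u)=\hat{min}(u)$ when $\hat\alpha(u)<k<\hat\beta(u)$ and $k-\hat\alpha(u)$ is even; and $\hat\gamma_k(u)=\hat{min}(u)+1$ otherwise. *)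

theory Defs
  imports Main "HOL-Library.Extended_Nat"
begin

definition simple_graph :: "'a set \<Rightarrow> 'a set set \<Rightarrow> bool" where
  "simple_graph V E \<longleftrightarrow> finite V \<and>
     (\<forall>e\<in>E. \<exists>u v. e = {u, v} \<and> u \<noteq> v \<and> u \<in> V \<and> v \<in> V)"

fun walk :: "'a set set \<Rightarrow> 'a list \<Rightarrow> bool" where
  "walk E [] = False"
| "walk E [x] = True"
| "walk E (x # y # xs) = ({x, y} \<in> E \<and> walk E (y # xs))"

definition induced_edges :: "'a set set \<Rightarrow> 'a set \<Rightarrow> 'a set set" where
  "induced_edges E S = {e \<in> E. e \<subseteq> S}"

definition connected_graph :: "'a set \<Rightarrow> 'a set set \<Rightarrow> bool" where
  "connected_graph V E \<longleftrightarrow> (\<forall>u\<in>V. \<forall>v\<in>V. \<exists>p. walk E p \<and> set p \<subseteq> V \<and> hd p = u \<and> last p = v)"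

definition dist :: "'a set \<Rightarrow> 'a set set \<Rightarrow> 'a \<Rightarrow> 'a \<Rightarrow> nat" where
  "dist V E u v = (LEAST n. \<exists>p. walk E p \<and> set p \<subseteq> V \<and> hd p = u \<and> last p = v \<and> length p = Suc n)"

definition distance_hereditary :: "'a set \<Rightarrow> 'a set set \<Rightarrow> bool" where
  "distance_hereditary V E \<longleftrightarrow>
     (\<forall>S\<subseteq>V. connected_graph S (induced_edges E S) \<longrightarrow>
        (\<forall>u\<in>S. \<forall>v\<in>S. dist S (induced_edges E S) u v = dist V E u v))"

definition closed_nbhd :: "'a set \<Rightarrow> 'a set set \<Rightarrow> 'a set \<Rightarrow> 'a set" where
  "closed_nbhd V E S = S \<union> {w\<in>V. \<exists>s\<in>S. {s, w} \<in> E}"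

definition has_perfect_matching :: "'a set set \<Rightarrow> 'a set \<Rightarrow> bool" where
  "has_perfect_matching E S \<longleftrightarrow>
     (\<exists>M. M \<subseteq> E \<and> (\<forall>e\<in>M. e \<subseteq> S) \<and> (\<forall>x\<in>S. \<exists>!e. e \<in> M \<and> x \<in> e))"

datatype op = TrueTwin | FalseTwin | Attach

datatype 'a dtree = Leaf 'a | Node op "'a dtree" "'a dtree"

fun tverts :: "'a dtree \<Rightarrow> 'a set" where
  "tverts (Leaf x) = {x}"
| "tverts (Node _ l r) = tverts l \<union> tverts r"

fun TS :: "'a dtree \<Rightarrow> 'a set" where
  "TS (Leaf x) = {x}"
| "TS (Node TrueTwin l r) = TS l \<union> TS r"
| "TS (Node FalseTwin l r) = TS l \<union> TS r"
| "TS (Node Attach l r) = TS l"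

fun tedges :: "'a dtree \<Rightarrow> 'a set set" where
  "tedges (Leaf x) = {}"
| "tedges (Node FalseTwin l r) = tedges l \<union> tedges r"
| "tedges (Node _ l r) = tedges l \<union> tedges r \<union> {{u, w} | u w. u \<in> TS l \<and> w \<in> TS r}"

text \<open>Leaves are pairwise distinct (bijection between leaves and vertices).\<close>
fun distinct_leaves :: "'a dtree \<Rightarrow> bool" where
  "distinct_leaves (Leaf x) = True"
| "distinct_leaves (Node _ l r) =
     (distinct_leaves l \<and> distinct_leaves r \<and> tverts l \<inter> tverts r = {})"

fun subtrees :: "'a dtree \<Rightarrow> 'a dtree set" where
  "subtrees (Leaf x) = {Leaf x}"
| "subtrees (Node o' l r) = insert (Node o' l r) (subtrees l \<union> subtrees r)"

definition decomposition_tree :: "'a dtree \<Rightarrow> 'a set \<Rightarrow> 'a set set \<Rightarrow> bool" where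
  "decomposition_tree T V E \<longleftrightarrow> distinct_leaves T \<and> tverts T = V \<and> tedges T = E"

definition k_feasible :: "'a dtree \<Rightarrow> nat \<Rightarrow> 'a set \<Rightarrow> bool" where
  "k_feasible u k S \<longleftrightarrow> S \<subseteq> tverts u \<and>
     tverts u - TS u \<subseteq> closed_nbhd (tverts u) (tedges u) S \<and>
     (\<exists>X. X \<subseteq> S \<inter> TS u \<and> card X = k \<and>
          has_perfect_matching (induced_edges (tedges u) (S - X)) (S - X))"

text \<open>Minimum size of a k-feasible set (infinity if there is none).\<close>
definition gamma :: "'a dtree \<Rightarrow> nat \<Rightarrow> enat" where
  "gamma u k = (INF S \<in> {S. k_feasible u k S}. enat (card S))"

definition gmin :: "'a dtree \<Rightarrow> enat" where
  "gmin u = Min {gamma u k | k. k \<le> card (TS u)}"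

definition galpha :: "'a dtree \<Rightarrow> nat" where
  "galpha u = (LEAST k. k \<le> card (TS u) \<and> gamma u k = gmin u)"

definition gbeta :: "'a dtree \<Rightarrow> nat" where
  "gbeta u = (GREATEST k. k \<le> card (TS u) \<and> gamma u k = gmin u)"

definition property_P :: "'a dtree \<Rightarrow> bool" where
  "property_P u \<longleftrightarrow> (\<forall>k \<le> card (TS u).
     (k \<le> galpha u \<longrightarrow> gamma u k = gmin u + enat (galpha u - k)) \<and>
     (k \<ge> gbeta u \<longrightarrow> gamma u k = gmin u + enat (k - gbeta u)) \<and>
     (galpha u < k \<and> k < gbeta u \<and> even (k - galpha u) \<longrightarrow> gamma u k = gmin u) \<and>
     (galpha u < k \<and> k < gbeta u \<and> odd (k - galpha u) \<longrightarrow> gamma u k = gmin u + 1))"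

end

theory Submission
  imports Defs
begin

lemma finite_tverts: "finite (tverts u)"
  by (induction u) auto

lemma TS_sub: "TS u \<subseteq> tverts u"
  by (induction u rule: TS.induct) auto

lemma TS_ne: "TS u \<noteq> {}"
  by (induction u rule: TS.induct) auto

lemma finite_TS: "finite (TS u)"
  by (rule finite_subset[OF TS_sub finite_tverts])

lemma tedges_sub: "e \<in> tedges u \<Longrightarrow> e \<subseteq> tverts u"
proof (induction u arbitrary: e)
  case (Node o' l r) then show ?case using TS_sub[of l] TS_sub[of r] by (cases o') auto
qed auto

lemma subtree_dl: "t \<in> subtrees T \<Longrightarrow> distinct_leaves T \<Longrightarrow> distinct_leaves t"
  by (induction T) auto

lemma feasible_le_card: "k_feasible u k S \<Longrightarrow> k \<le> card (TS u)"
  unfolding k_feasible_def using finite_TS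
  by (metis card_mono le_inf_iff)

lemma gamma_le: "k_feasible u k S \<Longrightarrow> gamma u k \<le> enat (card S)"
  unfolding gamma_def by (rule INF_lower2[of S]) auto

lemma gamma_inf: "\<not> (\<exists>S. k_feasible u k S) \<Longrightarrow> gamma u k = \<infinity>"
  unfolding gamma_def by (simp add: top_enat_def[symmetric])

lemma gamma_attained:
  assumes "\<exists>S. k_feasible u k S"
  shows "\<exists>S. k_feasible u k S \<and> gamma u k = enat (card S)"
proof -
  let ?A = "(\<lambda>S. enat (card S)) ` {S. k_feasible u k S}"
  have ne: "?A \<noteq> {}" using assms by auto
  have "gamma u k = Inf ?A" unfolding gamma_def by simp
  also have "\<dots> = (LEAST x. x \<in> ?A)" unfolding Inf_enat_def by (rule if_not_P[OF ne])
  finally have "gamma u k = (LEAST x. x \<in> ?A)" .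
  moreover have "(LEAST x. x \<in> ?A) \<in> ?A" using ne by (metis LeastI all_not_in_conv)
  ultimately show ?thesis by auto
qed

definition pm :: "'a set set \<Rightarrow> 'a set \<Rightarrow> bool" where
  "pm M A \<longleftrightarrow> (\<forall>e\<in>M. e \<subseteq> A) \<and> (\<forall>x\<in>A. \<exists>e\<in>M. x \<in> e) \<and>
     (\<forall>x\<in>A. \<forall>e1\<in>M. \<forall>e2\<in>M. x \<in> e1 \<longrightarrow> x \<in> e2 \<longrightarrow> e1 = e2)"

lemma ex1_iff: "(\<exists>!e. e \<in> M \<and> x \<in> e) \<longleftrightarrow> (\<exists>e\<in>M. x \<in> e) \<and> (\<forall>e1\<in>M. \<forall>e2\<in>M. x \<in> e1 \<longrightarrow> x \<in> e2 \<longrightarrow> e1 = e2)"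
  by auto

lemma hpm_iff: "has_perfect_matching (induced_edges E A) A \<longleftrightarrow> (\<exists>M. M \<subseteq> E \<and> pm M A)"
proof -
  have "has_perfect_matching (induced_edges E A) A \<longleftrightarrow> (\<exists>M. M \<subseteq> induced_edges E A \<and> pm M A)"
    unfolding has_perfect_matching_def pm_def ex1_iff by (simp add: ball_conj_distrib)
  also have "\<dots> \<longleftrightarrow> (\<exists>M. M \<subseteq> E \<and> pm M A)"
    unfolding induced_edges_def pm_def by (intro ex_cong1) blast
  finally show ?thesis .
qed

lemma pm_union:
  assumes "pm M1 A1" "pm M2 A2" "A1 \<inter> A2 = {}"
  shows "pm (M1 \<union> M2) (A1 \<union> A2)"
proof -
  have s1: "\<forall>e\<in>M1. e \<subseteq> A1" and c1: "\<forall>x\<in>A1. \<exists>e\<in>M1. x \<in> e"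
    and u1: "\<forall>x\<in>A1. \<forall>e1\<in>M1. \<forall>e2\<in>M1. x \<in> e1 \<longrightarrow> x \<in> e2 \<longrightarrow> e1 = e2"
    using assms(1) unfolding pm_def by auto
  have s2: "\<forall>e\<in>M2. e \<subseteq> A2" and c2: "\<forall>x\<in>A2. \<exists>e\<in>M2. x \<in> e"
    and u2: "\<forall>x\<in>A2. \<forall>e1\<in>M2. \<forall>e2\<in>M2. x \<in> e1 \<longrightarrow> x \<in> e2 \<longrightarrow> e1 = e2"
    using assms(2) unfolding pm_def by auto
  have a: "\<forall>e\<in>M1 \<union> M2. e \<subseteq> A1 \<union> A2" using s1 s2 by blast
  have b: "\<forall>x\<in>A1 \<union> A2. \<exists>e\<in>M1 \<union> M2. x \<in> e" using c1 c2 by blast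
  have c: "\<forall>x\<in>A1 \<union> A2. \<forall>e1\<in>M1 \<union> M2. \<forall>e2\<in>M1 \<union> M2. x \<in> e1 \<longrightarrow> x \<in> e2 \<longrightarrow> e1 = e2"
  proof (intro ballI impI)
    fix x e1 e2 assume x: "x \<in> A1 \<union> A2" and e: "e1 \<in> M1 \<union> M2" "e2 \<in> M1 \<union> M2" "x \<in> e1" "x \<in> e2"
    show "e1 = e2"
    proof (cases "x \<in> A1")
      case True
      then have "x \<notin> A2" using assms(3) by blast
      then have "e1 \<in> M1" "e2 \<in> M1" using e s2 by blast+
      then show ?thesis using u1 True e by blast
    next
      case False
      then have "x \<in> A2" using x by blast
      then have "e1 \<in> M2" "e2 \<in> M2" using e s1 False by blast+
      then show ?thesis using u2 \<open>x \<in> A2\<close> e by blast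
    qed
  qed
  show ?thesis unfolding pm_def by (intro conjI a b c)
qed

lemma pm_cross:
  assumes "bij_betw f Y Z" "Y \<inter> Z = {}"
  shows "pm ((\<lambda>y. {y, f y}) ` Y) (Y \<union> Z)"
proof -
  have fY: "f y \<in> Z" if "y \<in> Y" for y using assms(1) that by (auto simp: bij_betw_def)
  have inj: "inj_on f Y" using assms(1) by (simp add: bij_betw_def)
  have sur: "\<exists>y\<in>Y. f y = z" if "z \<in> Z" for z
  proof -
    have "z \<in> f ` Y" using assms(1) that by (simp add: bij_betw_def)
    then show ?thesis by (auto simp: image_iff)
  qed
  have a: "\<forall>e\<in>(\<lambda>y. {y, f y}) ` Y. e \<subseteq> Y \<union> Z"
  proof
    fix e assume "e \<in> (\<lambda>y. {y, f y}) ` Y"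
    then obtain y where "y \<in> Y" "e = {y, f y}" by (auto simp: image_iff)
    then show "e \<subseteq> Y \<union> Z" using fY by simp
  qed
  have b: "\<forall>x\<in>Y \<union> Z. \<exists>e\<in>(\<lambda>y. {y, f y}) ` Y. x \<in> e"
  proof
    fix x assume x: "x \<in> Y \<union> Z"
    show "\<exists>e\<in>(\<lambda>y. {y, f y}) ` Y. x \<in> e"
    proof (cases "x \<in> Y")
      case True
      show ?thesis by (rule bexI[of _ "{x, f x}"]) (use True in simp_all)
    next
      case False
      then have "x \<in> Z" using x by simp
      then obtain y where y: "y \<in> Y" "f y = x" using sur by blast
      have m: "{y, f y} \<in> (\<lambda>y. {y, f y}) ` Y" by (rule imageI[OF y(1)])
      have "x \<in> {y, f y}" using y(2) by simp
      then show ?thesis using m by blast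
    qed
  qed
  have c: "\<forall>x\<in>Y \<union> Z. \<forall>e1\<in>(\<lambda>y. {y, f y}) ` Y. \<forall>e2\<in>(\<lambda>y. {y, f y}) ` Y. x \<in> e1 \<longrightarrow> x \<in> e2 \<longrightarrow> e1 = e2"
  proof (intro ballI impI)
    fix x e1 e2 assume hh: "x \<in> Y \<union> Z" "e1 \<in> (\<lambda>y. {y, f y}) ` Y" "e2 \<in> (\<lambda>y. {y, f y}) ` Y" "x \<in> e1" "x \<in> e2"
    obtain y1 where y1: "y1 \<in> Y" "e1 = {y1, f y1}" using hh(2) by (auto simp: image_iff)
    obtain y2 where y2: "y2 \<in> Y" "e2 = {y2, f y2}" using hh(3) by (auto simp: image_iff)
    have z1: "f y1 \<notin> Y" "f y2 \<notin> Y" using fY[OF y1(1)] fY[OF y2(1)] assms(2) by auto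
    have "y1 = y2"
    proof (cases "x \<in> Y")
      case True
      then have "x = y1" "x = y2" using hh(4,5) y1 y2 z1 by auto
      then show ?thesis by simp
    next
      case False
      then have "x = f y1" "x = f y2" using hh(4,5) y1 y2 by auto
      then show ?thesis using inj y1(1) y2(1) by (metis inj_on_def)
    qed
    then show "e1 = e2" using y1 y2 by simp
  qed
  show ?thesis unfolding pm_def by (intro conjI a b c)
qed

lemma kf_iff: "k_feasible u k S \<longleftrightarrow> S \<subseteq> tverts u \<and>
     tverts u - TS u \<subseteq> closed_nbhd (tverts u) (tedges u) S \<and>
     (\<exists>X. X \<subseteq> S \<inter> TS u \<and> card X = k \<and> (\<exists>M. M \<subseteq> tedges u \<and> pm M (S - X)))"
  unfolding k_feasible_def hpm_iff by simp

lemma combine_attach: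
  assumes dl: "distinct_leaves (Node Attach l r)"
    and Fl: "k_feasible l (k + j) Sl" and Fr: "k_feasible r j Sr" and nz: "k + j \<noteq> 0"
  shows "k_feasible (Node Attach l r) k (Sl \<union> Sr)"
proof -
  have disj: "tverts l \<inter> tverts r = {}" using dl by simp
  obtain Xl Ml where Sl: "Sl \<subseteq> tverts l" and Dl: "tverts l - TS l \<subseteq> closed_nbhd (tverts l) (tedges l) Sl"
    and Xl: "Xl \<subseteq> Sl \<inter> TS l" and cXl: "card Xl = k + j" and Ml: "Ml \<subseteq> tedges l" and pMl: "pm Ml (Sl - Xl)"
    using Fl unfolding kf_iff by blast
  obtain Xr Mr where Sr: "Sr \<subseteq> tverts r" and Dr: "tverts r - TS r \<subseteq> closed_nbhd (tverts r) (tedges r) Sr"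
    and Xr: "Xr \<subseteq> Sr \<inter> TS r" and cXr: "card Xr = j" and Mr: "Mr \<subseteq> tedges r" and pMr: "pm Mr (Sr - Xr)"
    using Fr unfolding kf_iff by blast
  have finXl: "finite Xl" using Xl finite_TS[of l] by (meson le_inf_iff rev_finite_subset)
  have finXr: "finite Xr" using Xr finite_TS[of r] by (meson le_inf_iff rev_finite_subset)
  obtain X where X: "X \<subseteq> Xl" "card X = k" using obtain_subset_with_card_n[of k Xl] cXl by auto
  define Y where "Y = Xl - X"
  have cY: "card Y = j" unfolding Y_def using X cXl finXl by (simp add: card_Diff_subset finite_subset)
  have finY: "finite Y" unfolding Y_def using finXl by simp
  obtain f where f: "bij_betw f Y Xr" using finite_same_card_bij[OF finY finXr] cY cXr by auto
  have Yl: "Y \<subseteq> TS l" "Y \<subseteq> Xl" unfolding Y_def using Xl by auto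
  have TSl: "TS l \<subseteq> tverts l" and TSr: "TS r \<subseteq> tverts r" by (rule TS_sub)+
  have YX: "Y \<inter> Xr = {}" using Yl Xr TSl TSr disj by blast
  define C where "C = (\<lambda>y. {y, f y}) ` Y"
  have pC: "pm C (Y \<union> Xr)" unfolding C_def by (rule pm_cross[OF f YX])
  have pLR: "pm (Ml \<union> Mr) ((Sl - Xl) \<union> (Sr - Xr))"
    by (rule pm_union[OF pMl pMr]) (use Sl Sr disj in blast)
  have pAll: "pm ((Ml \<union> Mr) \<union> C) (((Sl - Xl) \<union> (Sr - Xr)) \<union> (Y \<union> Xr))"
    by (rule pm_union[OF pLR pC]) (use Sl Sr disj Yl Xr TSl in blast)
  have seteq: "(Sl \<union> Sr) - X = ((Sl - Xl) \<union> (Sr - Xr)) \<union> (Y \<union> Xr)"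
    unfolding Y_def using X Xl Xr Sl Sr disj by blast
  have Cedges: "C \<subseteq> {{u, w} | u w. u \<in> TS l \<and> w \<in> TS r}"
  proof
    fix e assume "e \<in> C"
    then obtain y where y: "y \<in> Y" "e = {y, f y}" unfolding C_def by (auto simp: image_iff)
    have "f y \<in> Xr" using f y(1) by (auto simp: bij_betw_def)
    then show "e \<in> {{u, w} | u w. u \<in> TS l \<and> w \<in> TS r}" using y Yl Xr by blast
  qed
  have medges: "(Ml \<union> Mr) \<union> C \<subseteq> tedges (Node Attach l r)" using Ml Mr Cedges by auto
  have dom: "tverts (Node Attach l r) - TS (Node Attach l r) \<subseteq>
      closed_nbhd (tverts (Node Attach l r)) (tedges (Node Attach l r)) (Sl \<union> Sr)"
  proof
    fix w assume w: "w \<in> tverts (Node Attach l r) - TS (Node Attach l r)"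
    show "w \<in> closed_nbhd (tverts (Node Attach l r)) (tedges (Node Attach l r)) (Sl \<union> Sr)"
    proof (cases "w \<in> tverts l")
      case True
      then have "w \<in> closed_nbhd (tverts l) (tedges l) Sl" using Dl w by auto
      then show ?thesis unfolding closed_nbhd_def by auto
    next
      case False
      then have wr: "w \<in> tverts r" using w by auto
      show ?thesis
      proof (cases "w \<in> TS r")
        case False
        then have "w \<in> closed_nbhd (tverts r) (tedges r) Sr" using Dr wr by auto
        then show ?thesis unfolding closed_nbhd_def by auto
      next
        case True
        have "Xl \<noteq> {}" using cXl nz by auto
        then obtain x where x: "x \<in> Xl" by blast
        then have "x \<in> Sl" "x \<in> TS l" using Xl by auto
        then have "{x, w} \<in> tedges (Node Attach l r)" using True by auto
        then show ?thesis unfolding closed_nbhd_def using wr \<open>x \<in> Sl\<close> by auto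
      qed
    qed
  qed
  have Xv: "X \<subseteq> (Sl \<union> Sr) \<inter> TS (Node Attach l r)" using X Xl by auto
  show ?thesis unfolding kf_iff
  proof (intro conjI exI)
    show "Sl \<union> Sr \<subseteq> tverts (Node Attach l r)" using Sl Sr by auto
    show "tverts (Node Attach l r) - TS (Node Attach l r) \<subseteq>
      closed_nbhd (tverts (Node Attach l r)) (tedges (Node Attach l r)) (Sl \<union> Sr)" by (rule dom)
    show "X \<subseteq> (Sl \<union> Sr) \<inter> TS (Node Attach l r)" by (rule Xv)
    show "card X = k" by (rule X(2))
    show "(Ml \<union> Mr) \<union> C \<subseteq> tedges (Node Attach l r)" by (rule medges)
    show "pm ((Ml \<union> Mr) \<union> C) (Sl \<union> Sr - X)" unfolding seteq by (rule pAll)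
  qed
qed

lemma TS_twin: "op' \<noteq> Attach \<Longrightarrow> TS (Node op' l r) = TS l \<union> TS r"
  by (cases op') auto

lemma tedges_twin: "tedges l \<union> tedges r \<subseteq> tedges (Node op' l r)"
  by (cases op') auto

lemma combine_twin:
  assumes dl: "distinct_leaves (Node op' l r)" and na: "op' \<noteq> Attach"
    and Fl: "k_feasible l k1 Sl" and Fr: "k_feasible r k2 Sr"
  shows "k_feasible (Node op' l r) (k1 + k2) (Sl \<union> Sr)"
proof -
  have disj: "tverts l \<inter> tverts r = {}" using dl by simp
  obtain Xl Ml where Sl: "Sl \<subseteq> tverts l" and Dl: "tverts l - TS l \<subseteq> closed_nbhd (tverts l) (tedges l) Sl"
    and Xl: "Xl \<subseteq> Sl \<inter> TS l" and cXl: "card Xl = k1" and Ml: "Ml \<subseteq> tedges l" and pMl: "pm Ml (Sl - Xl)"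
    using Fl unfolding kf_iff by blast
  obtain Xr Mr where Sr: "Sr \<subseteq> tverts r" and Dr: "tverts r - TS r \<subseteq> closed_nbhd (tverts r) (tedges r) Sr"
    and Xr: "Xr \<subseteq> Sr \<inter> TS r" and cXr: "card Xr = k2" and Mr: "Mr \<subseteq> tedges r" and pMr: "pm Mr (Sr - Xr)"
    using Fr unfolding kf_iff by blast
  have finXl: "finite Xl" using Xl finite_TS[of l] by (meson le_inf_iff rev_finite_subset)
  have finXr: "finite Xr" using Xr finite_TS[of r] by (meson le_inf_iff rev_finite_subset)
  have TSv: "TS (Node op' l r) = TS l \<union> TS r" by (rule TS_twin[OF na])
  have Ev: "tedges l \<union> tedges r \<subseteq> tedges (Node op' l r)" by (rule tedges_twin)
  have cX: "card (Xl \<union> Xr) = k1 + k2"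
  proof -
    have "Xl \<inter> Xr = {}" using Xl Xr Sl Sr disj by blast
    then show ?thesis using card_Un_disjoint[OF finXl finXr] cXl cXr by simp
  qed
  have pLR: "pm (Ml \<union> Mr) ((Sl - Xl) \<union> (Sr - Xr))"
    by (rule pm_union[OF pMl pMr]) (use Sl Sr disj in blast)
  have seteq: "(Sl \<union> Sr) - (Xl \<union> Xr) = (Sl - Xl) \<union> (Sr - Xr)"
    using Xl Xr Sl Sr disj by blast
  have dom: "tverts (Node op' l r) - TS (Node op' l r) \<subseteq>
      closed_nbhd (tverts (Node op' l r)) (tedges (Node op' l r)) (Sl \<union> Sr)"
  proof
    fix w assume w: "w \<in> tverts (Node op' l r) - TS (Node op' l r)"
    show "w \<in> closed_nbhd (tverts (Node op' l r)) (tedges (Node op' l r)) (Sl \<union> Sr)"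
    proof (cases "w \<in> tverts l")
      case True
      then have "w \<in> closed_nbhd (tverts l) (tedges l) Sl" using Dl w TSv by auto
      then show ?thesis unfolding closed_nbhd_def using Ev by auto
    next
      case False
      then have "w \<in> closed_nbhd (tverts r) (tedges r) Sr" using Dr w TSv by auto
      then show ?thesis unfolding closed_nbhd_def using Ev by auto
    qed
  qed
  show ?thesis unfolding kf_iff
  proof (intro conjI exI)
    show "Sl \<union> Sr \<subseteq> tverts (Node op' l r)" using Sl Sr by auto
    show "tverts (Node op' l r) - TS (Node op' l r) \<subseteq>
      closed_nbhd (tverts (Node op' l r)) (tedges (Node op' l r)) (Sl \<union> Sr)" by (rule dom)
    show "Xl \<union> Xr \<subseteq> (Sl \<union> Sr) \<inter> TS (Node op' l r)" using Xl Xr TSv by auto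
    show "card (Xl \<union> Xr) = k1 + k2" by (rule cX)
    show "Ml \<union> Mr \<subseteq> tedges (Node op' l r)" using Ml Mr Ev by auto
    show "pm (Ml \<union> Mr) (Sl \<union> Sr - (Xl \<union> Xr))" unfolding seteq by (rule pLR)
  qed
qed

lemma exists_feasible: "distinct_leaves u \<Longrightarrow> k \<le> card (TS u) \<Longrightarrow> \<exists>S. k_feasible u k S"
proof (induction u arbitrary: k)
  case (Leaf x)
  then have "k = 0 \<or> k = 1" by auto
  then show ?case
  proof
    assume "k = 0"
    have "k_feasible (Leaf x) k {}" unfolding kf_iff using \<open>k = 0\<close>
      by (auto simp: pm_def intro!: exI[of _ "{}"])
    then show ?thesis by blast
  next
    assume "k = 1"
    have "k_feasible (Leaf x) k {x}" unfolding kf_iff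
    proof (intro conjI exI)
      show "{x} \<subseteq> tverts (Leaf x)" by simp
      show "tverts (Leaf x) - TS (Leaf x) \<subseteq> closed_nbhd (tverts (Leaf x)) (tedges (Leaf x)) {x}" by simp
      show "{x} \<subseteq> {x} \<inter> TS (Leaf x)" by simp
      show "card {x} = k" using \<open>k = 1\<close> by simp
      show "{} \<subseteq> tedges (Leaf x)" by simp
      show "pm {} ({x} - {x})" by (simp add: pm_def)
    qed
    then show ?thesis by blast
  qed
next
  case (Node op' l r)
  have dll: "distinct_leaves l" and dlr: "distinct_leaves r" and disj: "tverts l \<inter> tverts r = {}"
    using Node.prems by auto
  have cl: "1 \<le> card (TS l)" using TS_ne[of l] finite_TS[of l] by (simp add: Suc_le_eq card_gt_0_iff)
  have cr: "1 \<le> card (TS r)" using TS_ne[of r] finite_TS[of r] by (simp add: Suc_le_eq card_gt_0_iff)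
  show ?case
  proof (cases "op' = Attach")
    case True
    have kl: "k \<le> card (TS l)" using Node.prems True by simp
    show ?thesis
    proof (cases "k = 0")
      case True
      obtain Sl where "k_feasible l (k + 1) Sl" using Node.IH(1)[OF dll, of "k+1"] cl \<open>k = 0\<close> by auto
      moreover obtain Sr where "k_feasible r 1 Sr" using Node.IH(2)[OF dlr cr] by auto
      ultimately have "k_feasible (Node Attach l r) k (Sl \<union> Sr)"
        using combine_attach[of l r k 1] Node.prems \<open>op' = Attach\<close> by auto
      then show ?thesis using \<open>op' = Attach\<close> by blast
    next
      case False
      obtain Sl where "k_feasible l (k + 0) Sl" using Node.IH(1)[OF dll kl] by auto
      moreover obtain Sr where "k_feasible r 0 Sr" using Node.IH(2)[OF dlr] by auto
      ultimately have "k_feasible (Node Attach l r) k (Sl \<union> Sr)"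
        using combine_attach[of l r k 0] Node.prems \<open>op' = Attach\<close> False by auto
      then show ?thesis using \<open>op' = Attach\<close> by blast
    qed
  next
    case False
    have dTS: "TS l \<inter> TS r = {}" using disj TS_sub[of l] TS_sub[of r] by blast
    have "card (TS (Node op' l r)) = card (TS l) + card (TS r)"
      unfolding TS_twin[OF False] by (rule card_Un_disjoint[OF finite_TS finite_TS dTS])
    then have kk: "k \<le> card (TS l) + card (TS r)" using Node.prems by simp
    define k1 where "k1 = min k (card (TS l))"
    define k2 where "k2 = k - k1"
    have k1: "k1 \<le> card (TS l)" and k2: "k2 \<le> card (TS r)" and ks: "k = k1 + k2"
      using kk unfolding k1_def k2_def by auto
    obtain Sl where "k_feasible l k1 Sl" using Node.IH(1)[OF dll k1] by auto
    moreover obtain Sr where "k_feasible r k2 Sr" using Node.IH(2)[OF dlr k2] by auto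
    ultimately have "k_feasible (Node op' l r) (k1 + k2) (Sl \<union> Sr)"
      using combine_twin[OF Node.prems(1) False] by blast
    then show ?thesis using ks by blast
  qed
qed

lemma card_cross_side:
  assumes "\<forall>e\<in>C. \<exists>u. e \<inter> V = {u}"
    and "\<forall>e1\<in>C. \<forall>e2\<in>C. \<forall>x\<in>V. x \<in> e1 \<longrightarrow> x \<in> e2 \<longrightarrow> e1 = e2"
  shows "card (\<Union>C \<inter> V) = card C"
proof -
  define g where "g = (\<lambda>e. the_elem (e \<inter> V))"
  have g: "g e \<in> e" "g e \<in> V" if ec: "e \<in> C" for e
  proof -
    have "\<exists>u. e \<inter> V = {u}" using assms(1) ec by simp
    then obtain u where "e \<inter> V = {u}" by blast
    then show "g e \<in> e" "g e \<in> V" unfolding g_def by auto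
  qed
  have inj: "inj_on g C"
  proof (rule inj_onI)
    fix e1 e2 assume e: "e1 \<in> C" "e2 \<in> C" "g e1 = g e2"
    have x: "g e1 \<in> V" "g e1 \<in> e1" using g[OF e(1)] by simp_all
    have x2: "g e1 \<in> e2" using g(1)[OF e(2)] e(3) by simp
    have "\<forall>x\<in>V. x \<in> e1 \<longrightarrow> x \<in> e2 \<longrightarrow> e1 = e2" using assms(2) e(1,2) by simp
    then show "e1 = e2" using x x2 by simp
  qed
  have img: "g ` C = \<Union>C \<inter> V"
  proof
    show "g ` C \<subseteq> \<Union>C \<inter> V" using g by auto
    show "\<Union>C \<inter> V \<subseteq> g ` C"
    proof
      fix x assume "x \<in> \<Union>C \<inter> V"
      then obtain e where e: "e \<in> C" "x \<in> e" "x \<in> V" by auto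
      have "\<exists>u. e \<inter> V = {u}" using assms(1) e(1) by simp
      then obtain u where u: "e \<inter> V = {u}" by blast
      then have "x = u" using e by auto
      then have "g e = x" using u unfolding g_def by simp
      then show "x \<in> g ` C" using e(1) by (metis imageI)
    qed
  qed
  have "bij_betw g C (\<Union>C \<inter> V)" unfolding bij_betw_def using inj img by simp
  then show ?thesis by (simp add: bij_betw_same_card)
qed

lemma split_attach:
  assumes dl: "distinct_leaves (Node Attach l r)"
    and F: "k_feasible (Node Attach l r) k S"
  shows "\<exists>j. k_feasible l (k + j) (S \<inter> tverts l) \<and> k_feasible r j (S \<inter> tverts r)"
proof -
  have disj: "tverts l \<inter> tverts r = {}" using dl by simp
  have TSl: "TS l \<subseteq> tverts l" and TSr: "TS r \<subseteq> tverts r" by (rule TS_sub)+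
  define CR where "CR = {{u, w} | u w. u \<in> TS l \<and> w \<in> TS r}"
  have Ev: "tedges (Node Attach l r) = tedges l \<union> tedges r \<union> CR" unfolding CR_def by simp
  obtain X M where Sv: "S \<subseteq> tverts l \<union> tverts r"
    and D: "tverts (Node Attach l r) - TS (Node Attach l r) \<subseteq> closed_nbhd (tverts (Node Attach l r)) (tedges (Node Attach l r)) S"
    and X: "X \<subseteq> S \<inter> TS l" and cX: "card X = k" and M: "M \<subseteq> tedges (Node Attach l r)" and pM: "pm M (S - X)"
    using F unfolding kf_iff by auto
  have sM: "\<forall>e\<in>M. e \<subseteq> S - X" and cM: "\<forall>x\<in>S - X. \<exists>e\<in>M. x \<in> e"
    and uM: "\<forall>x\<in>S - X. \<forall>e1\<in>M. \<forall>e2\<in>M. x \<in> e1 \<longrightarrow> x \<in> e2 \<longrightarrow> e1 = e2"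
    using pM unfolding pm_def by auto
  have Dv: "w \<in> S \<or> (\<exists>s\<in>S. {s, w} \<in> tedges l \<union> tedges r \<union> CR)"
    if "w \<in> tverts l \<union> tverts r" "w \<notin> TS l" for w
  proof -
    have D': "tverts l \<union> tverts r - TS l \<subseteq> closed_nbhd (tverts l \<union> tverts r) (tedges l \<union> tedges r \<union> CR) S"
      using D unfolding Ev by simp
    show ?thesis using D' that unfolding closed_nbhd_def by blast
  qed
  define C where "C = {e\<in>M. e \<notin> tedges l \<and> e \<notin> tedges r}"
  have Ccr: "\<exists>u w. e = {u, w} \<and> u \<in> TS l \<and> w \<in> TS r" if "e \<in> C" for e
    using that M Ev unfolding C_def CR_def by auto
  have CM: "C \<subseteq> M" unfolding C_def by blast
  define Ll where "Ll = \<Union>C \<inter> tverts l"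
  define Lr where "Lr = \<Union>C \<inter> tverts r"
  have uC: "\<forall>e1\<in>C. \<forall>e2\<in>C. \<forall>x\<in>V. x \<in> e1 \<longrightarrow> x \<in> e2 \<longrightarrow> e1 = e2" for V
    using uM sM CM by blast
  have cLl: "card Ll = card C" unfolding Ll_def
  proof (rule card_cross_side[OF _ uC])
    show "\<forall>e\<in>C. \<exists>u. e \<inter> tverts l = {u}"
    proof
      fix e assume "e \<in> C"
      then obtain u w where "e = {u, w}" "u \<in> TS l" "w \<in> TS r" using Ccr by blast
      then have "e \<inter> tverts l = {u}" using TSl TSr disj by blast
      then show "\<exists>u. e \<inter> tverts l = {u}" by blast
    qed
  qed
  have cLr: "card Lr = card C" unfolding Lr_def
  proof (rule card_cross_side[OF _ uC])
    show "\<forall>e\<in>C. \<exists>u. e \<inter> tverts r = {u}"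
    proof
      fix e assume "e \<in> C"
      then obtain u w where "e = {u, w}" "u \<in> TS l" "w \<in> TS r" using Ccr by blast
      then have "e \<inter> tverts r = {w}" using TSl TSr disj by blast
      then show "\<exists>u. e \<inter> tverts r = {u}" by blast
    qed
  qed
  have LlS: "Ll \<subseteq> S - X" "Lr \<subseteq> S - X" unfolding Ll_def Lr_def using CM sM by blast+
  have LlTS: "Ll \<subseteq> TS l"
  proof
    fix x assume "x \<in> Ll"
    then obtain e where e: "e \<in> C" "x \<in> e" "x \<in> tverts l" unfolding Ll_def by blast
    then obtain u w where "e = {u, w}" "u \<in> TS l" "w \<in> TS r" using Ccr by blast
    then show "x \<in> TS l" using e TSr disj by blast
  qed
  have LrTS: "Lr \<subseteq> TS r"
  proof
    fix x assume "x \<in> Lr"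
    then obtain e where e: "e \<in> C" "x \<in> e" "x \<in> tverts r" unfolding Lr_def by blast
    then obtain u w where "e = {u, w}" "u \<in> TS l" "w \<in> TS r" using Ccr by blast
    then show "x \<in> TS r" using e TSl disj by blast
  qed
  have finX: "finite X" using X finite_TS[of l] by (meson le_inf_iff rev_finite_subset)
  have finLl: "finite Ll" unfolding Ll_def using finite_tverts[of l] by simp
  have cXl: "card (X \<union> Ll) = k + card C"
  proof -
    have "X \<inter> Ll = {}" using LlS by blast
    then show ?thesis using card_Un_disjoint[OF finX finLl] cX cLl by simp
  qed
  have edge_avoid: "e \<inter> (Ll \<union> Lr) = {}" if "e \<in> M" "e \<in> tedges l \<or> e \<in> tedges r" for e
  proof (rule ccontr)
    assume "e \<inter> (Ll \<union> Lr) \<noteq> {}"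
    then obtain x where x: "x \<in> e" "x \<in> Ll \<union> Lr" by blast
    then obtain c where c: "c \<in> C" "x \<in> c" unfolding Ll_def Lr_def by blast
    have "x \<in> S - X" using x that(1) sM by blast
    then have "c = e" using uM c CM that(1) x(1) by blast
    then show False using c(1) that(2) unfolding C_def by blast
  qed
  define Ml where "Ml = {e\<in>M. e \<in> tedges l}"
  define Mr where "Mr = {e\<in>M. e \<in> tedges r}"
  have feasl: "k_feasible l (k + card C) (S \<inter> tverts l)" unfolding kf_iff
  proof (intro conjI exI)
    show "S \<inter> tverts l \<subseteq> tverts l" by simp
    show "tverts l - TS l \<subseteq> closed_nbhd (tverts l) (tedges l) (S \<inter> tverts l)"
    proof
      fix w assume w: "w \<in> tverts l - TS l"
      then have "w \<in> S \<or> (\<exists>s\<in>S. {s, w} \<in> tedges l \<union> tedges r \<union> CR)" using Dv by blast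
      then show "w \<in> closed_nbhd (tverts l) (tedges l) (S \<inter> tverts l)"
      proof
        assume "w \<in> S" then show ?thesis using w unfolding closed_nbhd_def by blast
      next
        assume "\<exists>s\<in>S. {s, w} \<in> tedges l \<union> tedges r \<union> CR"
        then obtain s where s: "s \<in> S" "{s, w} \<in> tedges l \<union> tedges r \<union> CR" by blast
        have "{s, w} \<notin> tedges r" using tedges_sub[of "{s, w}" r] w disj by blast
        moreover have "{s, w} \<notin> CR" using w TSr disj unfolding CR_def by (auto simp: doubleton_eq_iff)
        ultimately have "{s, w} \<in> tedges l" using s by blast
        then have "s \<in> tverts l" using tedges_sub[of "{s, w}" l] by blast
        then show ?thesis using s \<open>{s, w} \<in> tedges l\<close> w unfolding closed_nbhd_def by blast
      qed
    qed
    show "X \<union> Ll \<subseteq> S \<inter> tverts l \<inter> TS l" using X LlS LlTS TSl by blast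
    show "card (X \<union> Ll) = k + card C" by (rule cXl)
    show "Ml \<subseteq> tedges l" unfolding Ml_def by blast
    show "pm Ml (S \<inter> tverts l - (X \<union> Ll))" unfolding pm_def
    proof (intro conjI ballI impI)
      fix e assume e: "e \<in> Ml"
      then have "e \<subseteq> S - X" "e \<subseteq> tverts l" "e \<inter> (Ll \<union> Lr) = {}"
        using sM tedges_sub[of e l] edge_avoid unfolding Ml_def by blast+
      then show "e \<subseteq> S \<inter> tverts l - (X \<union> Ll)" by blast
    next
      fix x assume x: "x \<in> S \<inter> tverts l - (X \<union> Ll)"
      then obtain e where e: "e \<in> M" "x \<in> e" using cM by blast
      have "e \<notin> tedges r" using tedges_sub[of e r] x e disj by blast
      moreover have "e \<notin> C" using x e unfolding Ll_def by blast
      ultimately have "e \<in> Ml" using e unfolding Ml_def C_def by blast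
      then show "\<exists>e\<in>Ml. x \<in> e" using e by blast
    next
      fix x e1 e2 assume "x \<in> S \<inter> tverts l - (X \<union> Ll)" "e1 \<in> Ml" "e2 \<in> Ml" "x \<in> e1" "x \<in> e2"
      then show "e1 = e2" using uM unfolding Ml_def by blast
    qed
  qed
  have Xr0: "X \<inter> tverts r = {}" using X TSl disj by blast
  have feasr: "k_feasible r (card C) (S \<inter> tverts r)" unfolding kf_iff
  proof (intro conjI exI)
    show "S \<inter> tverts r \<subseteq> tverts r" by simp
    show "tverts r - TS r \<subseteq> closed_nbhd (tverts r) (tedges r) (S \<inter> tverts r)"
    proof
      fix w assume w: "w \<in> tverts r - TS r"
      then have "w \<notin> TS l" using TSl disj by blast
      then have "w \<in> S \<or> (\<exists>s\<in>S. {s, w} \<in> tedges l \<union> tedges r \<union> CR)" using Dv w by blast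
      then show "w \<in> closed_nbhd (tverts r) (tedges r) (S \<inter> tverts r)"
      proof
        assume "w \<in> S" then show ?thesis using w unfolding closed_nbhd_def by blast
      next
        assume "\<exists>s\<in>S. {s, w} \<in> tedges l \<union> tedges r \<union> CR"
        then obtain s where s: "s \<in> S" "{s, w} \<in> tedges l \<union> tedges r \<union> CR" by blast
        have "{s, w} \<notin> tedges l" using tedges_sub[of "{s, w}" l] w disj by blast
        moreover have "{s, w} \<notin> CR" using w TSl disj unfolding CR_def by (auto simp: doubleton_eq_iff)
        ultimately have "{s, w} \<in> tedges r" using s by blast
        then have "s \<in> tverts r" using tedges_sub[of "{s, w}" r] by blast
        then show ?thesis using s \<open>{s, w} \<in> tedges r\<close> w unfolding closed_nbhd_def by blast
      qed
    qed
    show "Lr \<subseteq> S \<inter> tverts r \<inter> TS r" using LlS LrTS TSr by blast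
    show "card Lr = card C" by (rule cLr)
    show "Mr \<subseteq> tedges r" unfolding Mr_def by blast
    show "pm Mr (S \<inter> tverts r - Lr)" unfolding pm_def
    proof (intro conjI ballI impI)
      fix e assume e: "e \<in> Mr"
      then have "e \<subseteq> S - X" "e \<subseteq> tverts r" "e \<inter> (Ll \<union> Lr) = {}"
        using sM tedges_sub[of e r] edge_avoid unfolding Mr_def by blast+
      then show "e \<subseteq> S \<inter> tverts r - Lr" by blast
    next
      fix x assume x: "x \<in> S \<inter> tverts r - Lr"
      then have "x \<in> S - X" using Xr0 by blast
      then obtain e where e: "e \<in> M" "x \<in> e" using cM by blast
      have "e \<notin> tedges l" using tedges_sub[of e l] x e disj by blast
      moreover have "e \<notin> C" using x e unfolding Lr_def by blast
      ultimately have "e \<in> Mr" using e unfolding Mr_def C_def by blast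
      then show "\<exists>e\<in>Mr. x \<in> e" using e by blast
    next
      fix x e1 e2 assume "x \<in> S \<inter> tverts r - Lr" "e1 \<in> Mr" "e2 \<in> Mr" "x \<in> e1" "x \<in> e2"
      moreover have "x \<in> S - X" using calculation(1) Xr0 by blast
      ultimately show "e1 = e2" using uM unfolding Mr_def by blast
    qed
  qed
  show ?thesis using feasl feasr by blast
qed

lemma gmin_props:
  assumes dl: "distinct_leaves u"
  shows "\<exists>k\<le>card (TS u). gamma u k = gmin u" and "gmin u \<le> gamma u k" and "\<exists>n. gmin u = enat n"
proof -
  have Aeq: "{gamma u k | k. k \<le> card (TS u)} = (\<lambda>k. gamma u k) ` {..card (TS u)}" by auto
  have fin: "finite {gamma u k | k. k \<le> card (TS u)}" unfolding Aeq by simp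
  have ne: "{gamma u k | k. k \<le> card (TS u)} \<noteq> {}" by auto
  have "gmin u \<in> {gamma u k | k. k \<le> card (TS u)}" unfolding gmin_def by (rule Min_in[OF fin ne])
  then show ex: "\<exists>k\<le>card (TS u). gamma u k = gmin u" by auto
  show "gmin u \<le> gamma u k"
  proof (cases "k \<le> card (TS u)")
    case True
    then have "gamma u k \<in> {gamma u k | k. k \<le> card (TS u)}" by auto
    then show ?thesis unfolding gmin_def by (rule Min_le[OF fin])
  next
    case False
    then have "\<not> (\<exists>S. k_feasible u k S)" using feasible_le_card by fastforce
    then show ?thesis by (simp add: gamma_inf)
  qed
  obtain k where k: "k \<le> card (TS u)" "gamma u k = gmin u" using ex by blast
  obtain S where "k_feasible u k S \<and> gamma u k = enat (card S)"
    using gamma_attained exists_feasible[OF dl k(1)] by blast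
  then show "\<exists>n. gmin u = enat n" using k by auto
qed

lemma galpha_props:
  assumes dl: "distinct_leaves u"
  shows "galpha u \<le> card (TS u)" "gamma u (galpha u) = gmin u"
    and "k < galpha u \<Longrightarrow> k \<le> card (TS u) \<Longrightarrow> gamma u k \<noteq> gmin u"
proof -
  obtain k0 where k0: "k0 \<le> card (TS u) \<and> gamma u k0 = gmin u" using gmin_props(1)[OF dl] by blast
  have "galpha u \<le> card (TS u) \<and> gamma u (galpha u) = gmin u"
    unfolding galpha_def by (rule LeastI[of _ k0]) (rule k0)
  then show "galpha u \<le> card (TS u)" "gamma u (galpha u) = gmin u" by auto
  show "gamma u k \<noteq> gmin u" if "k < galpha u" "k \<le> card (TS u)"
    using not_less_Least[of k "\<lambda>k. k \<le> card (TS u) \<and> gamma u k = gmin u"] that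
    unfolding galpha_def by blast
qed

lemma gbeta_props:
  assumes dl: "distinct_leaves u"
  shows "gbeta u \<le> card (TS u)" "gamma u (gbeta u) = gmin u"
    and "k \<le> card (TS u) \<Longrightarrow> gamma u k = gmin u \<Longrightarrow> k \<le> gbeta u"
proof -
  obtain k0 where k0: "k0 \<le> card (TS u) \<and> gamma u k0 = gmin u" using gmin_props(1)[OF dl] by blast
  have "gbeta u \<le> card (TS u) \<and> gamma u (gbeta u) = gmin u"
    unfolding gbeta_def by (rule GreatestI_nat[of _ k0 "card (TS u)"]) (use k0 in auto)
  then show "gbeta u \<le> card (TS u)" "gamma u (gbeta u) = gmin u" by auto
  show "k \<le> gbeta u" if "k \<le> card (TS u)" "gamma u k = gmin u"
    unfolding gbeta_def by (rule Greatest_le_nat[of _ k "card (TS u)"]) (use that in auto)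
qed

lemma enat_strict:
  assumes "enat a \<le> g" "g \<le> enat c" "g \<noteq> enat a"
  shows "a < c"
proof -
  have "enat a < enat c" using assms by (metis order.not_eq_order_implies_strict order_le_less_trans)
  then show ?thesis by simp
qed

theorem lemma32:
  fixes T :: "'a dtree" and V :: "'a set" and E :: "'a set set"
    and vl vr :: "'a dtree"
  assumes "simple_graph V E"
    and "distance_hereditary V E"
    and "decomposition_tree T V E"
    and "Node Attach vl vr \<in> subtrees T"
    and "property_P vl" and "property_P vr"
    and "galpha vr \<le> gbeta vl"
    and "\<not> (galpha vl = 0 \<and> gbeta vr = 0)"
    and "\<not> (galpha vr = 0 \<and> gbeta vl = 0)"
  shows "gbeta (Node Attach vl vr) = gbeta vl - galpha vr"
proof -
  define v where "v = Node Attach vl vr"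
  have dlv: "distinct_leaves v" unfolding v_def
    using subtree_dl[OF assms(4)] assms(3) unfolding decomposition_tree_def by blast
  have dll: "distinct_leaves vl" and dlr: "distinct_leaves vr"
    and disj: "tverts vl \<inter> tverts vr = {}" using dlv unfolding v_def by auto
  obtain a where a: "gmin vl = enat a" using gmin_props(3)[OF dll] by blast
  obtain b where b: "gmin vr = enat b" using gmin_props(3)[OF dlr] by blast
  define bl where "bl = gbeta vl"
  define ar where "ar = galpha vr"
  define K where "K = bl - ar"
  have arbl: "ar \<le> bl" using assms(7) unfolding ar_def bl_def .
  have TSv: "TS v = TS vl" unfolding v_def by simp
  have lower: "a + b \<le> card S \<and> (K < k \<longrightarrow> a + b < card S)" if F: "k_feasible v k S" for k S
  proof -
    obtain j where Fl: "k_feasible vl (k + j) (S \<inter> tverts vl)" and Fr: "k_feasible vr j (S \<inter> tverts vr)"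
      using split_attach[OF dlv[unfolded v_def] F[unfolded v_def]] by blast
    have Ssub: "S \<subseteq> tverts vl \<union> tverts vr" using F unfolding k_feasible_def v_def by simp
    have finS: "finite S" using Ssub finite_tverts[of vl] finite_tverts[of vr]
      by (meson finite_UnI rev_finite_subset)
    have "S = (S \<inter> tverts vl) \<union> (S \<inter> tverts vr)" using Ssub by blast
    then have cS: "card S = card (S \<inter> tverts vl) + card (S \<inter> tverts vr)"
      using card_Un_disjoint[of "S \<inter> tverts vl" "S \<inter> tverts vr"] finS disj
      by (metis Int_assoc Int_commute Int_empty_right finite_Int)
    have gl1: "enat a \<le> gamma vl (k + j)" using gmin_props(2)[OF dll] a by metis
    have gl2: "gamma vl (k + j) \<le> enat (card (S \<inter> tverts vl))" by (rule gamma_le[OF Fl])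
    have gr1: "enat b \<le> gamma vr j" using gmin_props(2)[OF dlr] b by metis
    have gr2: "gamma vr j \<le> enat (card (S \<inter> tverts vr))" by (rule gamma_le[OF Fr])
    have la: "a \<le> card (S \<inter> tverts vl)" using order_trans[OF gl1 gl2] by simp
    have lb: "b \<le> card (S \<inter> tverts vr)" using order_trans[OF gr1 gr2] by simp
    have strict: "a + b < card S" if "K < k"
    proof (cases "bl < k + j")
      case True
      have "k + j \<le> card (TS vl)" by (rule feasible_le_card[OF Fl])
      then have "gamma vl (k + j) \<noteq> enat a" using gbeta_props(3)[OF dll, of "k + j"] True a
        unfolding bl_def by auto
      then have "a < card (S \<inter> tverts vl)" using enat_strict[OF gl1 gl2] by blast
      then show ?thesis using lb cS by linarith
    next
      case False
      then have "j < ar" using that arbl unfolding K_def by linarith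
      moreover have "j \<le> card (TS vr)" by (rule feasible_le_card[OF Fr])
      ultimately have "gamma vr j \<noteq> enat b" using galpha_props(3)[OF dlr, of j] b
        unfolding ar_def by auto
      then have "b < card (S \<inter> tverts vr)" using enat_strict[OF gr1 gr2] by blast
      then show ?thesis using la cS by linarith
    qed
    show ?thesis using la lb cS strict by auto
  qed
  have gbl: "gamma vl bl = enat a" using gbeta_props(2)[OF dll] a unfolding bl_def by simp
  have gar: "gamma vr ar = enat b" using galpha_props(2)[OF dlr] b unfolding ar_def by simp
  have blc: "bl \<le> card (TS vl)" using gbeta_props(1)[OF dll] unfolding bl_def .
  have arc: "ar \<le> card (TS vr)" using galpha_props(1)[OF dlr] unfolding ar_def .
  obtain Sl where Sl: "k_feasible vl bl Sl" "gamma vl bl = enat (card Sl)"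
    using gamma_attained exists_feasible[OF dll blc] by blast
  obtain Sr where Sr: "k_feasible vr ar Sr" "gamma vr ar = enat (card Sr)"
    using gamma_attained exists_feasible[OF dlr arc] by blast
  have nz: "K + ar \<noteq> 0" using assms(9) arbl unfolding K_def ar_def bl_def by auto
  have "k_feasible v K (Sl \<union> Sr)" unfolding v_def
    by (rule combine_attach[OF dlv[unfolded v_def] _ Sr(1) nz]) (use Sl arbl in \<open>simp add: K_def\<close>)
  then have up: "gamma v K \<le> enat (a + b)"
    using gamma_le[of v K "Sl \<union> Sr"] card_Un_le[of Sl Sr] Sl(2) Sr(2) gbl gar
    by (metis enat_ord_simps(1) order_trans plus_enat_simps(1) of_nat_add)
  have lowall: "enat (a + b) \<le> gamma v k" for k
  proof (cases "\<exists>S. k_feasible v k S")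
    case True
    then obtain S where "k_feasible v k S" "gamma v k = enat (card S)" using gamma_attained by blast
    then show ?thesis using lower by simp
  next
    case False
    then show ?thesis by (simp add: gamma_inf)
  qed
  have gK: "gamma v K = enat (a + b)" using up lowall[of K] by simp
  have gminv: "gmin v = enat (a + b)"
  proof -
    obtain k0 where "gamma v k0 = gmin v" using gmin_props(1)[OF dlv] by blast
    then have "enat (a + b) \<le> gmin v" using lowall by metis
    moreover have "gmin v \<le> enat (a + b)" using gmin_props(2)[OF dlv, of K] gK by simp
    ultimately show ?thesis by simp
  qed
  have "gbeta v = K" unfolding gbeta_def
  proof (rule Greatest_equality)
    show "K \<le> card (TS v) \<and> gamma v K = gmin v" using blc TSv gK gminv unfolding K_def by simp
  next
    fix y assume y: "y \<le> card (TS v) \<and> gamma v y = gmin v"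
    show "y \<le> K"
    proof (rule ccontr)
      assume "\<not> y \<le> K"
      then have "K < y" by simp
      obtain S where S: "k_feasible v y S" "gamma v y = enat (card S)"
        using gamma_attained exists_feasible[OF dlv] y by blast
      then have "a + b < card S" using lower \<open>K < y\<close> by blast
      then show False using S(2) y gminv by simp
    qed
  qed
  then show ?thesis unfolding v_def K_def bl_def ar_def .
qed

end
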